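(* Consider a parallel system (so $\phi(s)=1$ if and only if $s_k=1$ for at least one $k$), with an arbitrary joint prior distribution of the component states and with inspection error rates $\epsilon_{FA},\epsilon_{FS}\in[0,1/2)$ identical for all components. For any two components $c_i,c_j$ with $p_i\le p_j$, we have $I_i\supseteq I_j$, i.e. $p_{\omega|y_i=1}\le p_{\omega|y_j=1}\le p_{\omega|y_j=0}\le p_{\omega|y_i=0}$, and consequently $\mathrm{VoI}_G(i)\ge\mathrm{VoI}_G(j)$ for every concave function $l^*$. In particular, the most reliable component (the one with the lowest marginal failure probability) has the highest $\mathrm{VoI}_G$, regardless of $l^*$.
   Context: A system consists of $N$ binary components $c_1,\dots,c_N$ with random joint state $s=(s_1,\dots,s_N)\in\{0,1\}^N$ ($s_k=1$: working; $s_k=0$: failed), with arbitrary prior distribution $p_s$. The system state is $u=\phi(s)$ ($u=0$: system failure), $p_\pi=\mathbb{P}[u=0]$, and $p_k=\mathbb{P}[s_k=0]$ is the marginal failure probability of $c_k$. Inspecting $c_k$ yields a binary observation $y_k$ (alarm $y_k=0$, silence $y_k=1$) which, given $s$, depends only on $s_k$, with $\mathbb{P}[y_k=1\mid s_k=0]=\epsilon_{FS}$ and $\mathbb{P}[y_k=0\mid s_k=1]=\epsilon_{FA}$. Then $h_k=\mathbb{P}[y_k=0]=\epsilon_{FA}+(1-\epsilon_{FA}-\epsilon_{FS})p_k$; posterior system failure probabilities are $p_{\omega|y_k=b}=\mathbb{P}[u=0\mid y_k=b]$ (defined when the conditioning event has positive probability), and $I_k=[p_{\omega|y_k=1},p_{\omega|y_k=0}]$.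 Global metric: for a concave $l^*:[0,1]\to\mathbb{R}$, $L^G_\pi=l^*(p_\pi)$, $L^G_\omega(k)=h_k\,l^*(p_{\omega|y_k=0})+(1-h_k)\,l^*(p_{\omega|y_k=1})$ (a term with zero probability is omitted), and $\mathrm{VoI}_G(k)=L^G_\pi-L^G_\omega(k)$. *)

theory Defs
  imports "HOL-Analysis.Analysis" "HOL-Probability.Probability"
begin

text \<open>A joint state is s :: 'n => bool
 (True = working, i.e. s_k = 1; False = failed). Observations: True = silence (y=1),
 False = alarm (y=0).\<close>

definition parallel_phi :: "('n::finite \<Rightarrow> bool) \<Rightarrow> bool" where
  "parallel_phi s = (\<exists>k. s k)"

definition obs_pmf :: "real \<Rightarrow> real \<Rightarrow> bool \<Rightarrow> bool pmf" where
  "obs_pmf eFA eFS sk = (if sk then bernoulli_pmf (1 - eFA) else bernoulli_pmf eFS)"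

definition joint_pmf :: "('n \<Rightarrow> bool) pmf \<Rightarrow> real \<Rightarrow> real \<Rightarrow> 'n \<Rightarrow> (('n \<Rightarrow> bool) \<times> bool) pmf" where
  "joint_pmf ps eFA eFS k = bind_pmf ps (\<lambda>s. map_pmf (\<lambda>y. (s, y)) (obs_pmf eFA eFS (s k)))"

definition marg_fail :: "('n \<Rightarrow> bool) pmf \<Rightarrow> 'n \<Rightarrow> real" where
  "marg_fail ps k = measure_pmf.prob ps {s. \<not> s k}"

definition prior_fail :: "('n::finite \<Rightarrow> bool) pmf \<Rightarrow> real" where
  "prior_fail ps = measure_pmf.prob ps {s. \<not> parallel_phi s}"

definition obs_prob :: "('n \<Rightarrow> bool) pmf \<Rightarrow> real \<Rightarrow> real \<Rightarrow> 'n \<Rightarrow> bool \<Rightarrow> real" where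
  "obs_prob ps eFA eFS k b = measure_pmf.prob (joint_pmf ps eFA eFS k) {(s, y). y = b}"

definition h_alarm :: "('n \<Rightarrow> bool) pmf \<Rightarrow> real \<Rightarrow> real \<Rightarrow> 'n \<Rightarrow> real" where
  "h_alarm ps eFA eFS k = obs_prob ps eFA eFS k False"

text \<open>Posterior system failure probability P[u=0 | y_k=b]; meaningful only when
 obs_prob ps eFA eFS k b > 0.\<close>
definition post_fail :: "('n::finite \<Rightarrow> bool) pmf \<Rightarrow> real \<Rightarrow> real \<Rightarrow> 'n \<Rightarrow> bool \<Rightarrow> real" where
  "post_fail ps eFA eFS k b =
     measure_pmf.prob (joint_pmf ps eFA eFS k) {(s, y). y = b \<and> \<not> parallel_phi s}
     / obs_prob ps eFA eFS k b"

definition LG_omega :: "(real \<Rightarrow> real) \<Rightarrow> ('n::finite \<Rightarrow> bool) pmf \<Rightarrow> real \<Rightarrow> real \<Rightarrow> 'n \<Rightarrow> real" where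
  "LG_omega l ps eFA eFS k =
     (if h_alarm ps eFA eFS k > 0
        then h_alarm ps eFA eFS k * l (post_fail ps eFA eFS k False) else 0)
   + (if 1 - h_alarm ps eFA eFS k > 0
        then (1 - h_alarm ps eFA eFS k) * l (post_fail ps eFA eFS k True) else 0)"

definition VoI_G :: "(real \<Rightarrow> real) \<Rightarrow> ('n::finite \<Rightarrow> bool) pmf \<Rightarrow> real \<Rightarrow> real \<Rightarrow> 'n \<Rightarrow> real" where
  "VoI_G l ps eFA eFS k = l (prior_fail ps) - LG_omega l ps eFA eFS k"

end

theory Submission
  imports Defs
begin

lemma bind_prob: "measure_pmf.prob (bind_pmf M N) X = (\<integral>x. measure_pmf.prob (N x) X \<partial>M)"
  unfolding measure_pmf_bind
  apply (rule measure_pmf.measure_bind[where N="count_space UNIV"])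
  apply (auto simp: space_subprob_algebra measurable_def intro: prob_space_imp_subprob_space measure_pmf.prob_space_axioms)
  done

lemma joint_gen:
  "measure_pmf.prob (joint_pmf ps eFA eFS k) {(s,y). y = b \<and> Q s}
   = (\<integral>s. (if Q s then pmf (obs_pmf eFA eFS (s k)) b else 0) \<partial>ps)"
  unfolding joint_pmf_def bind_prob
proof (rule Bochner_Integration.integral_cong[OF refl])
  fix s
  have "(\<lambda>y. (s, y)) -` {(s, y). y = b \<and> Q s} = (if Q s then {b} else {})" by auto
  then show "measure_pmf.prob (map_pmf (\<lambda>y. (s, y)) (obs_pmf eFA eFS (s k))) {(s, y). y = b \<and> Q s} =
         (if Q s then pmf (obs_pmf eFA eFS (s k)) b else 0)"
    by (simp add: measure_pmf_single)
qed

lemma integ_aux: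
  "(\<integral>s. (a + d * indicator A s) \<partial>(measure_pmf ps)) = a + d * measure_pmf.prob ps A"
proof -
  have i1: "integrable (measure_pmf ps) (\<lambda>s. d * indicator A s :: real)"
    by (rule measure_pmf.integrable_const_bound[where B="\<bar>d\<bar>"]) (auto simp: indicator_def)
  show ?thesis
    using i1 by (subst Bochner_Integration.integral_add) (auto simp del: integrable_mult_right_iff)
qed

lemma obs_False:
  assumes "0 \<le> eFA" "eFA \<le> 1" "0 \<le> eFS" "eFS \<le> 1"
  shows "obs_prob ps eFA eFS k False = eFA + (1-eFA-eFS) * marg_fail ps k"
proof -
  have "obs_prob ps eFA eFS k False = (\<integral>s. (if True then pmf (obs_pmf eFA eFS (s k)) False else 0) \<partial>ps)"
    unfolding obs_prob_def joint_gen[symmetric] by simp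
  also have "\<dots> = (\<integral>s. (eFA + (1-eFA-eFS) * indicator {s. \<not> s k} s) \<partial>ps)"
    using assms by (intro Bochner_Integration.integral_cong) (auto simp: obs_pmf_def)
  finally show ?thesis by (simp add: integ_aux marg_fail_def)
qed

lemma obs_True:
  assumes "0 \<le> eFA" "eFA \<le> 1" "0 \<le> eFS" "eFS \<le> 1"
  shows "obs_prob ps eFA eFS k True = (1 - eFA) - (1-eFA-eFS) * marg_fail ps k"
proof -
  have "obs_prob ps eFA eFS k True = (\<integral>s. (if True then pmf (obs_pmf eFA eFS (s k)) True else 0) \<partial>ps)"
    unfolding obs_prob_def joint_gen[symmetric] by simp
  also have "\<dots> = (\<integral>s. ((1-eFA) + (-(1-eFA-eFS)) * indicator {s. \<not> s k} s) \<partial>ps)"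
    using assms by (intro Bochner_Integration.integral_cong) (auto simp: obs_pmf_def)
  finally show ?thesis unfolding integ_aux marg_fail_def by (simp add: algebra_simps)
qed

lemma num_gen:
  assumes "0 \<le> eFA" "eFA \<le> 1" "0 \<le> eFS" "eFS \<le> 1"
  shows "measure_pmf.prob (joint_pmf ps eFA eFS k) {(s, y). y = b \<and> \<not> parallel_phi s}
     = (if b then eFS else 1 - eFS) * prior_fail ps"
proof -
  have "measure_pmf.prob (joint_pmf ps eFA eFS k) {(s, y). y = b \<and> \<not> parallel_phi s}
     = (\<integral>s. (0 + (if b then eFS else 1 - eFS) * indicator {s. \<not> parallel_phi s} s) \<partial>ps)"
    unfolding joint_gen
    using assms by (intro Bochner_Integration.integral_cong) (auto simp: obs_pmf_def parallel_phi_def)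
  then show ?thesis by (simp add: integ_aux prior_fail_def)
qed

lemma m_le_p: "prior_fail ps \<le> marg_fail ps k"
  unfolding prior_fail_def marg_fail_def
  by (rule measure_pmf.finite_measure_mono) (auto simp: parallel_phi_def)

lemma conc_pt:
  fixes l :: "real \<Rightarrow> real"
  assumes l: "concave_on {0..1} l" and "0 \<le> x1" "x1 < x0" "x0 \<le> 1" "x1 \<le> y" "y \<le> x0"
  shows "l y \<ge> ((y-x1)/(x0-x1)) * l x0 + (1 - (y-x1)/(x0-x1)) * l x1"
proof -
  define t where "t = (y-x1)/(x0-x1)"
  have t0: "0 \<le> t" "t \<le> 1" using assms by (auto simp: t_def field_simps)
  have tt: "t*(x0-x1) = y-x1" using assms by (simp add: t_def)
  have "(1 - t) * x1 + t * x0 = x1 + t*(x0-x1)" by (simp add: algebra_simps)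
  then have e: "(1 - t) *\<^sub>R x1 + t *\<^sub>R x0 = y" using tt by simp
  have "l ((1 - t) *\<^sub>R x1 + t *\<^sub>R x0) \<ge> (1 - t) * l x1 + t * l x0"
    by (rule concave_onD[OF l t0]) (use assms in auto)
  then show ?thesis unfolding e t_def[symmetric] by simp
qed

lemma spread0:
  fixes l :: "real \<Rightarrow> real"
  assumes l: "concave_on {0..1} l" and x: "0 \<le> x1" "x1 \<le> x0" "x0 \<le> 1"
    and h: "0 \<le> hy" "hy \<le> 1"
    and mean: "hx*x0 + (1-hx)*x1 = hy*y0 + (1-hy)*y1"
    and y0: "x1 \<le> y0" "y0 \<le> x0" and y1: "x1 \<le> y1" "y1 \<le> x0"
  shows "hx * l x0 + (1-hx) * l x1 \<le> hy * l y0 + (1-hy) * l y1"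
proof (cases "x1 = x0")
  case True
  then have "y0 = x0" "y1 = x0" using y0 y1 by auto
  then show ?thesis using True by (simp add: algebra_simps)
next
  case False
  then have lt: "x1 < x0" using x by simp
  define t0 where "t0 = (y0-x1)/(x0-x1)"
  define t1 where "t1 = (y1-x1)/(x0-x1)"
  have a0: "l y0 \<ge> t0 * l x0 + (1-t0) * l x1" unfolding t0_def
    using conc_pt[OF l x(1) lt x(3) y0] .
  have a1: "l y1 \<ge> t1 * l x0 + (1-t1) * l x1" unfolding t1_def
    using conc_pt[OF l x(1) lt x(3) y1] .
  have ht: "hy*t0 + (1-hy)*t1 = hx"
  proof -
    have q0: "t0*(x0-x1) = y0-x1" "t1*(x0-x1) = y1-x1" using lt by (simp_all add: t0_def t1_def)
    have "(hy*t0 + (1-hy)*t1)*(x0-x1) = hy*(t0*(x0-x1)) + (1-hy)*(t1*(x0-x1))" by (simp add: algebra_simps)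
    also have "\<dots> = (hy*y0 + (1-hy)*y1) - x1" unfolding q0 by (simp add: algebra_simps)
    also have "\<dots> = hx*(x0-x1)" unfolding mean[symmetric] by (simp add: algebra_simps)
    finally show ?thesis using lt by simp
  qed
  have "hy * l y0 \<ge> hy * (t0 * l x0 + (1-t0) * l x1)" using a0 h by (simp add: mult_left_mono)
  moreover have "(1-hy) * l y1 \<ge> (1-hy) * (t1 * l x0 + (1-t1) * l x1)" using a1 h by (simp add: mult_left_mono)
  moreover have "hy * (t0 * l x0 + (1-t0) * l x1) + (1-hy) * (t1 * l x0 + (1-t1) * l x1)
      = hx * l x0 + (1-hx) * l x1" unfolding ht[symmetric] by (simp add: algebra_simps)
  ultimately show ?thesis by linarith
qed

lemma spread:
  fixes l :: "real \<Rightarrow> real"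
  assumes l: "concave_on {0..1} l" and x: "0 \<le> x1" "x1 \<le> x0" "x0 \<le> 1"
    and h: "0 \<le> hy" "hy \<le> 1"
    and mean: "hx*x0 + (1-hx)*x1 = hy*y0 + (1-hy)*y1"
    and y0: "hy > 0 \<Longrightarrow> x1 \<le> y0 \<and> y0 \<le> x0" and y1: "hy < 1 \<Longrightarrow> x1 \<le> y1 \<and> y1 \<le> x0"
  shows "hx * l x0 + (1-hx) * l x1 \<le> hy * l y0 + (1-hy) * l y1"
proof -
  define y0' where "y0' = (if hy > 0 then y0 else y1)"
  define y1' where "y1' = (if hy < 1 then y1 else y0)"
  have e1: "hy*y0 + (1-hy)*y1 = hy*y0' + (1-hy)*y1'" using h by (auto simp: y0'_def y1'_def)
  have e2: "hy*l y0 + (1-hy)*l y1 = hy*l y0' + (1-hy)*l y1'" using h by (auto simp: y0'_def y1'_def)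
  have "hy > 0 \<or> hy < 1" using h by linarith
  then have "x1 \<le> y0' \<and> y0' \<le> x0" "x1 \<le> y1' \<and> y1' \<le> x0"
    using y0 y1 h unfolding y0'_def y1'_def by auto
  then show ?thesis unfolding e2 using spread0[OF l x h mean[unfolded e1]] by auto
qed

definition LGr :: "(real \<Rightarrow> real) \<Rightarrow> real \<Rightarrow> real \<Rightarrow> real \<Rightarrow> real" where
  "LGr l e h m = (if h > 0 then h * l ((1-e)*m/h) else 0) + (if 1 - h > 0 then (1-h) * l (e*m/(1-h)) else 0)"

lemma LGr_mono:
  fixes l :: "real \<Rightarrow> real"
  assumes l: "concave_on {0..1} l" and e: "0 \<le> e" "e \<le> 1/2" and m: "0 \<le> m" "m \<le> 1"
    and hi: "(1-e)*m \<le> hi" and hij: "hi \<le> hj" and hj: "hj \<le> 1 - e"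
  shows "LGr l e hi m \<le> LGr l e hj m"
proof (cases "m = 0")
  case True
  have "0 \<le> (1-e)*m" using e m by simp
  then have "0 \<le> hi" using hi by linarith
  have Lz: "LGr l e h 0 = l 0" if "0 \<le> h" "h \<le> 1" for h
    using that by (auto simp: LGr_def algebra_simps)
  have "0 \<le> hi" "hi \<le> 1" "0 \<le> hj" "hj \<le> 1" using True hi hij hj e by auto
  then show ?thesis using True Lz by simp
next
  case False
  then have mp: "m > 0" using m by simp
  have "(1-e)*m > 0" using e mp by simp
  then have hip: "hi > 0" using hi by linarith
  have hjp: "hj > 0" using hip hij by simp
  define x0 where "x0 = (1-e)*m/hi"
  define x1 where "x1 = e*m/(1-hi)"
  define y0 where "y0 = (1-e)*m/hj"
  define y1 where "y1 = e*m/(1-hj)"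
  have L: "LGr l e h m = h * l ((1-e)*m/h) + (1-h) * l (e*m/(1-h))" if "0 \<le> h" "h \<le> 1" for h
    using that by (auto simp: LGr_def)
  have mean: "h * ((1-e)*m/h) + (1-h) * (e*m/(1-h)) = m" if "0 < h" "h \<le> 1 - e" for h
  proof (cases "h = 1")
    case True then have "e = 0" using that e by simp
    then show ?thesis using True by simp
  next
    case False then show ?thesis using that e by (simp add: field_simps)
  qed
  have x0le: "x0 \<le> 1" unfolding x0_def using hip hi by simp
  have "(e+hi)*m \<le> 1*m" using hij hj mp by (intro mult_right_mono) auto
  then have mx0: "m \<le> x0" unfolding x0_def using hip by (simp add: field_simps distrib_right)
  have x1m: "x1 \<le> m"
  proof (cases "hi = 1")
    case True then show ?thesis by (simp add: x1_def m)
  next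
    case False
    then have "1 - hi > 0" using hij hj e by simp
    moreover have "e \<le> 1 - hi" using hij hj by simp
    ultimately show ?thesis unfolding x1_def using mp e
      by (simp add: divide_le_eq mult.commute mult_left_mono)
  qed
  have x1nn: "0 \<le> x1" unfolding x1_def using e m hij hj by simp
  have "(e+hj)*m \<le> 1*m" using hj mp by (intro mult_right_mono) auto
  then have my0: "m \<le> y0" unfolding y0_def using hjp by (simp add: field_simps distrib_right)
  have y0x0: "y0 \<le> x0" unfolding y0_def x0_def using hip hij e m
    by (simp add: divide_left_mono)
  have y1m: "hj < 1 \<Longrightarrow> y1 \<le> m" unfolding y1_def using hj e mp
    by (simp add: divide_le_eq mult.commute mult_left_mono)
  have x1y1: "hj < 1 \<Longrightarrow> x1 \<le> y1" unfolding x1_def y1_def using hij e m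
    by (simp add: divide_left_mono)
  have "hi * x0 + (1-hi) * x1 = hj * y0 + (1-hj) * y1"
    unfolding x0_def x1_def y0_def y1_def using mean[OF hip] mean[OF hjp] hij hj by simp
  have x10: "x1 \<le> x0" using x1m mx0 by linarith
  have hj0: "0 \<le> hj" "hj \<le> 1" using hjp hj e by auto
  have c0: "x1 \<le> y0 \<and> y0 \<le> x0" using x1m my0 y0x0 by linarith
  have c1: "x1 \<le> y1 \<and> y1 \<le> x0" if "hj < 1" using y1m[OF that] x1y1[OF that] mx0 by linarith
  have "hi * l x0 + (1 - hi) * l x1 \<le> hj * l y0 + (1 - hj) * l y1"
    by (rule spread[OF l x1nn x10 x0le hj0 \<open>hi * x0 + (1-hi) * x1 = hj * y0 + (1-hj) * y1\<close>])
       (use c0 c1 in auto)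
  moreover have "LGr l e hi m = hi * l x0 + (1 - hi) * l x1"
    unfolding x0_def x1_def using hip hij hj e by (intro L) auto
  moreover have "LGr l e hj m = hj * l y0 + (1 - hj) * l y1"
    unfolding y0_def y1_def using hj0 by (intro L) auto
  ultimately show ?thesis by simp
qed

lemma LG_eq:
  assumes "0 \<le> eFA" "eFA \<le> 1" "0 \<le> eFS" "eFS \<le> 1"
  shows "LG_omega l ps eFA eFS k = LGr l eFS (eFA + (1-eFA-eFS) * marg_fail ps k) (prior_fail ps)"
proof -
  have pF: "post_fail ps eFA eFS k False = (1-eFS) * prior_fail ps / (eFA + (1-eFA-eFS) * marg_fail ps k)"
    unfolding post_fail_def num_gen[OF assms] obs_False[OF assms] by simp
  have pT: "post_fail ps eFA eFS k True = eFS * prior_fail ps / (1 - (eFA + (1-eFA-eFS) * marg_fail ps k))"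
    unfolding post_fail_def num_gen[OF assms] obs_True[OF assms] by (simp add: algebra_simps)
  show ?thesis unfolding LG_omega_def LGr_def pF pT h_alarm_def obs_False[OF assms] ..
qed

lemma div_le_m:
  fixes a m d :: real
  assumes "0 \<le> m" "0 < d" "a \<le> d"
  shows "a * m / d \<le> m"
proof -
  have "a * m \<le> d * m" using assms by (intro mult_right_mono) auto
  then show ?thesis using assms by (simp add: divide_le_eq mult.commute)
qed

lemma m_le_div:
  fixes a m d :: real
  assumes "0 \<le> m" "0 < d" "d \<le> a"
  shows "m \<le> a * m / d"
proof -
  have "d * m \<le> a * m" using assms by (intro mult_right_mono) auto
  then show ?thesis using assms by (simp add: le_divide_eq mult.commute)
qed

theorem mainTheorem2:
  fixes ps :: "('n::finite \<Rightarrow> bool) pmf" and eFA eFS :: real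
  assumes "0 \<le> eFA" "eFA < 1/2" "0 \<le> eFS" "eFS < 1/2"
  shows "(\<forall>i j. marg_fail ps i \<le> marg_fail ps j \<longrightarrow>
            ((obs_prob ps eFA eFS i True > 0 \<and> obs_prob ps eFA eFS j True > 0 \<longrightarrow>
                post_fail ps eFA eFS i True \<le> post_fail ps eFA eFS j True)
           \<and> (obs_prob ps eFA eFS j True > 0 \<and> obs_prob ps eFA eFS j False > 0 \<longrightarrow>
                post_fail ps eFA eFS j True \<le> post_fail ps eFA eFS j False)
           \<and> (obs_prob ps eFA eFS j False > 0 \<and> obs_prob ps eFA eFS i False > 0 \<longrightarrow>
                post_fail ps eFA eFS j False \<le> post_fail ps eFA eFS i False)
           \<and> (\<forall>l. concave_on {0..1} l \<longrightarrow> VoI_G l ps eFA eFS i \<ge> VoI_G l ps eFA eFS j)))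
       \<and> (\<forall>i. (\<forall>k. marg_fail ps i \<le> marg_fail ps k) \<longrightarrow>
            (\<forall>l. concave_on {0..1} l \<longrightarrow> (\<forall>k. VoI_G l ps eFA eFS i \<ge> VoI_G l ps eFA eFS k)))"
proof -
  have E: "0 \<le> eFA" "eFA \<le> 1" "0 \<le> eFS" "eFS \<le> 1" using assms by auto
  define c where "c = 1 - eFA - eFS"
  have cpos: "c > 0" using assms by (simp add: c_def)
  define m where "m = prior_fail ps"
  define h where "h k = eFA + c * marg_fail ps k" for k
  have m0: "0 \<le> m" by (simp add: m_def prior_fail_def)
  have mp: "m \<le> marg_fail ps k" for k unfolding m_def by (rule m_le_p)
  have p1: "marg_fail ps k \<le> 1" for k by (simp add: marg_fail_def)
  have oF: "obs_prob ps eFA eFS k False = h k" for k using obs_False[OF E] by (simp add: h_def c_def)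
  have oT: "obs_prob ps eFA eFS k True = 1 - h k" for k using obs_True[OF E] by (simp add: h_def c_def algebra_simps)
  have pF: "post_fail ps eFA eFS k False = (1-eFS) * m / h k" for k
    unfolding post_fail_def num_gen[OF E] oF m_def by simp
  have pT: "post_fail ps eFA eFS k True = eFS * m / (1 - h k)" for k
    unfolding post_fail_def num_gen[OF E] oT m_def by simp
  have LG: "LG_omega l ps eFA eFS k = LGr l eFS (h k) m" for l k
    unfolding LG_eq[OF E] h_def c_def m_def ..
  have hlow: "(1-eFS) * m \<le> h k" for k
  proof -
    have "c * m \<le> c * marg_fail ps k" using cpos mp by (intro mult_left_mono) auto
    moreover have "eFA * m \<le> eFA" using E m0 mp[of k] p1[of k] by (simp add: mult_left_le)
    ultimately show ?thesis unfolding h_def c_def by (simp add: algebra_simps)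
  qed
  have hup: "h k \<le> 1 - eFS" for k
  proof -
    have "c * marg_fail ps k \<le> c * 1" using cpos p1 by (intro mult_left_mono) auto
    then show ?thesis unfolding h_def c_def by simp
  qed
  have hmono: "h i \<le> h j" if "marg_fail ps i \<le> marg_fail ps j" for i j
    unfolding h_def using cpos that by (simp add: mult_left_mono)
  have part1: "((obs_prob ps eFA eFS i True > 0 \<and> obs_prob ps eFA eFS j True > 0 \<longrightarrow>
                post_fail ps eFA eFS i True \<le> post_fail ps eFA eFS j True)
           \<and> (obs_prob ps eFA eFS j True > 0 \<and> obs_prob ps eFA eFS j False > 0 \<longrightarrow>
                post_fail ps eFA eFS j True \<le> post_fail ps eFA eFS j False)
           \<and> (obs_prob ps eFA eFS j False > 0 \<and> obs_prob ps eFA eFS i False > 0 \<longrightarrow>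
                post_fail ps eFA eFS j False \<le> post_fail ps eFA eFS i False)
           \<and> (\<forall>l. concave_on {0..1} l \<longrightarrow> VoI_G l ps eFA eFS i \<ge> VoI_G l ps eFA eFS j))"
    if ij: "marg_fail ps i \<le> marg_fail ps j" for i j
  proof (intro conjI impI allI)
    have hij: "h i \<le> h j" using hmono[OF ij] .
    have em: "0 \<le> eFS * m" "0 \<le> (1-eFS) * m" using E m0 by auto
    show "post_fail ps eFA eFS i True \<le> post_fail ps eFA eFS j True"
      if "obs_prob ps eFA eFS i True > 0 \<and> obs_prob ps eFA eFS j True > 0"
      using that hij em unfolding pT oT by (intro divide_left_mono) auto
    show "post_fail ps eFA eFS j True \<le> post_fail ps eFA eFS j False"
      if "obs_prob ps eFA eFS j True > 0 \<and> obs_prob ps eFA eFS j False > 0"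
    proof -
      have "eFS * m / (1 - h j) \<le> m" using that hup[of j] m0 unfolding oT by (intro div_le_m) auto
      moreover have "m \<le> (1-eFS) * m / h j" using that hup[of j] m0 unfolding oF by (intro m_le_div) auto
      ultimately show ?thesis unfolding pT pF by linarith
    qed
    show "post_fail ps eFA eFS j False \<le> post_fail ps eFA eFS i False"
      if "obs_prob ps eFA eFS j False > 0 \<and> obs_prob ps eFA eFS i False > 0"
      using that hij em unfolding pF oF by (intro divide_left_mono) auto
    fix l :: "real \<Rightarrow> real" assume l: "concave_on {0..1} l"
    have "LGr l eFS (h i) m \<le> LGr l eFS (h j) m"
      by (rule LGr_mono[OF l]) (use E assms m0 mp[of i] p1[of i] hlow hij hup in auto)
    then show "VoI_G l ps eFA eFS i \<ge> VoI_G l ps eFA eFS j"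
      unfolding VoI_G_def LG by simp
  qed
  show ?thesis
    using part1 by blast
qed

end
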